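(* Let $B = M \cup \{\omega_1,\ldots,\omega_p\}$ with $p\ge1$ and $\omega_i\in P_2\setminus M$, let $r(B)=\max\{d(\omega_1),\ldots,d(\omega_p)\}$ and $c(B)=\log_2(2r(B)+1)+1$. Then for every finite system $F$ of Boolean functions of variables $x_1,\ldots,x_n$, $$I_B(F)\ge \left\lceil \log_2(d(F)+1)\right\rceil - c(B).$$
   Context: $P_2$ denotes the set of all Boolean functions and $M\subset P_2$ the set of all monotone Boolean functions (including the constants). Tuples in $\{0,1\}^n$ are compared componentwise. An increasing chain is a sequence of pairwise distinct tuples $\tilde\alpha_1,\ldots,\tilde\alpha_r\in\{0,1\}^n$ with $\tilde\alpha_i\le\tilde\alpha_{i+1}$ for all $i$. For a Boolean function $f$, a pair $(\tilde\alpha,\tilde\beta)$ with $\tilde\alpha\le\tilde\beta$ and $f(\tilde\alpha)>f(\tilde\beta)$ is a jump of $f$; a pair is a jump of a system $F$ if it is a jump of some $f\in F$. For a chain $C=(\tilde\alpha_1,\ldots,\tilde\alpha_r)$, $d_C(F)$ is the number of $i$ with $(\tilde\alpha_i,\tilde\alpha_{i+1})$ a jump of $F$, and $d(F)=\max_C d_C(F)$ over all chains; $d(f)=d(\{f\})$. A circuit over $B$ is a Boolean circuit with inputs $x_1,\ldots,x_n$ whose gates compute functions of $B$; gates computing functions in $M$ have weight $0$ and gates computing some $\omega_i$ have weight $1$. $I_B(F)$ is the minimum total weight of a circuit over $B$ realizing all functions of $F$. *)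

theory Defs
  imports Complex_Main
begin

text \<open>Tuples of {0,1}^n are bool lists of length n (False = 0, True = 1).
  A Boolean function of k variables is a map bool list \<Rightarrow> bool, considered on
  lists of length k.\<close>

definition tuples :: "nat \<Rightarrow> bool list set" where
  "tuples n = {xs. length xs = n}"

definition tle :: "bool list \<Rightarrow> bool list \<Rightarrow> bool" where
  "tle xs ys \<longleftrightarrow> list_all2 (\<le>) xs ys"

definition monotone_fn :: "nat \<Rightarrow> (bool list \<Rightarrow> bool) \<Rightarrow> bool" where
  "monotone_fn k f \<longleftrightarrow>
     (\<forall>xs ys. length xs = k \<longrightarrow> length ys = k \<longrightarrow> tle xs ys \<longrightarrow> f xs \<le> f ys)"

definition is_chain :: "nat \<Rightarrow> bool list list \<Rightarrow> bool" where
  "is_chain n C \<longleftrightarrow> distinct C \<and> (\<forall>a\<in>set C. length a = n) \<and>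
     (\<forall>i. Suc i < length C \<longrightarrow> tle (C ! i) (C ! Suc i))"

definition is_jump :: "(bool list \<Rightarrow> bool) set \<Rightarrow> bool list \<Rightarrow> bool list \<Rightarrow> bool" where
  "is_jump F a b \<longleftrightarrow> tle a b \<and> (\<exists>f\<in>F. f a > f b)"

definition dC :: "(bool list \<Rightarrow> bool) set \<Rightarrow> bool list list \<Rightarrow> nat" where
  "dC F C = card {i. Suc i < length C \<and> is_jump F (C ! i) (C ! Suc i)}"

definition dF :: "nat \<Rightarrow> (bool list \<Rightarrow> bool) set \<Rightarrow> nat" where
  "dF n F = Max {dC F C | C. is_chain n C}"

text \<open>Circuits: nodes 0..n-1 are the inputs x_1..x_n; gate j (0-based) is node n+j.
  A gate is a pair (g, args): it computes g applied to the values of the nodes in args,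
  so g is a Boolean function of length args variables.\<close>
type_synonym gate = "(bool list \<Rightarrow> bool) \<times> nat list"

fun circ_vals :: "gate list \<Rightarrow> bool list \<Rightarrow> bool list" where
  "circ_vals [] v = v"
| "circ_vals ((g, as) # gs) v = circ_vals gs (v @ [g (map (\<lambda>i. v ! i) as)])"

definition wf_circuit :: "nat \<Rightarrow> gate list \<Rightarrow> bool" where
  "wf_circuit n gs \<longleftrightarrow> (\<forall>j < length gs. \<forall>i \<in> set (snd (gs ! j)). i < n + j)"

text \<open>Basis B = M \<union> {\<omega>_1,...,\<omega>_p}; each \<omega>_i is given as (arity, function).\<close>
definition gate_in_basis :: "(nat \<times> (bool list \<Rightarrow> bool)) list \<Rightarrow> gate \<Rightarrow> bool" where
  "gate_in_basis oms gt \<longleftrightarrow>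
     (let k = length (snd gt) in
       monotone_fn k (fst gt) \<or>
       (\<exists>(m, w) \<in> set oms. m = k \<and> (\<forall>xs. length xs = k \<longrightarrow> fst gt xs = w xs)))"

definition gate_weight :: "gate \<Rightarrow> nat" where
  "gate_weight gt = (if monotone_fn (length (snd gt)) (fst gt) then 0 else 1)"

definition circ_weight :: "gate list \<Rightarrow> nat" where
  "circ_weight gs = (\<Sum>gt\<leftarrow>gs. gate_weight gt)"

definition realizes :: "(nat \<times> (bool list \<Rightarrow> bool)) list \<Rightarrow> nat \<Rightarrow> gate list
                        \<Rightarrow> (bool list \<Rightarrow> bool) set \<Rightarrow> bool" where
  "realizes oms n gs F \<longleftrightarrow> wf_circuit n gs \<and> (\<forall>gt\<in>set gs. gate_in_basis oms gt) \<and>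
     (\<forall>f\<in>F. \<exists>j < n + length gs. \<forall>xs. length xs = n \<longrightarrow> circ_vals gs xs ! j = f xs)"

definition I_B :: "(nat \<times> (bool list \<Rightarrow> bool)) list \<Rightarrow> nat \<Rightarrow> (bool list \<Rightarrow> bool) set \<Rightarrow> nat" where
  "I_B oms n F = (LEAST w. \<exists>gs. realizes oms n gs F \<and> circ_weight gs = w)"

definition r_B :: "(nat \<times> (bool list \<Rightarrow> bool)) list \<Rightarrow> nat" where
  "r_B oms = Max ((\<lambda>(k, w). dF k {w}) ` set oms)"

definition c_B :: "(nat \<times> (bool list \<Rightarrow> bool)) list \<Rightarrow> real" where
  "c_B oms = log 2 (2 * real (r_B oms) + 1) + 1"

end

theory Submission
  imports Defs
begin

lemma tle_refl: "tle xs xs"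
  unfolding tle_def by (simp add: list_all2_refl)

lemma tle_trans: "tle xs ys \<Longrightarrow> tle ys zs \<Longrightarrow> tle xs zs"
  unfolding tle_def list_all2_conv_all_nth
proof (intro conjI allI impI)
  assume a: "length xs = length ys \<and> (\<forall>i<length xs. xs ! i \<le> ys ! i)"
    and b: "length ys = length zs \<and> (\<forall>i<length ys. ys ! i \<le> zs ! i)"
  then show "length xs = length zs" by simp
  fix i assume "i < length xs"
  then have "xs ! i \<le> ys ! i" "ys ! i \<le> zs ! i" using a b by auto
  then show "xs ! i \<le> zs ! i" by (rule order_trans)
qed

lemma tle_antisym: "tle xs ys \<Longrightarrow> tle ys xs \<Longrightarrow> xs = ys"
  unfolding tle_def by (rule list_all2_antisym) auto

lemma cv_len: "length (circ_vals gs v) = length v + length gs"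
  by (induction gs arbitrary: v) auto

lemma cv_prefix: "i < length v \<Longrightarrow> circ_vals gs v ! i = v ! i"
  by (induction gs arbitrary: v) (auto simp: nth_append)

lemma cv_gate:
  "j < length gs \<Longrightarrow> (\<forall>i\<in>set (snd (gs!j)). i < length v + j) \<Longrightarrow>
   circ_vals gs v ! (length v + j) = fst (gs!j) (map (\<lambda>i. circ_vals gs v ! i) (snd (gs!j)))"
proof (induction gs arbitrary: v j)
  case Nil then show ?case by simp
next
  case (Cons gt gs)
  obtain g as where gt: "gt = (g, as)" by force
  show ?case
  proof (cases j)
    case 0
    have "circ_vals (gt # gs) v ! (length v + j) = g (map ((!) v) as)"
      using gt 0 by (simp add: cv_prefix)
    also have "\<dots> = g (map (\<lambda>i. circ_vals (gt # gs) v ! i) as)"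
      using Cons.prems gt 0 by (intro arg_cong[where f=g] map_cong) (auto simp: cv_prefix nth_append)
    finally show ?thesis using gt 0 by simp
  next
    case (Suc j')
    let ?v = "v @ [g (map ((!) v) as)]"
    have "circ_vals gs ?v ! (length ?v + j') = fst (gs!j') (map (\<lambda>i. circ_vals gs ?v ! i) (snd (gs!j')))"
      using Cons.prems Suc by (intro Cons.IH) auto
    then show ?thesis using gt Suc by simp
  qed
qed

lemma chain_tle:
  assumes "is_chain n C" "i \<le> i'" "i' < length C"
  shows "tle (C!i) (C!i')"
  using assms(2,3)
proof (induction i' rule: nat.induct)
  case zero then show ?case by (simp add: tle_refl)
next
  case (Suc m)
  show ?case
  proof (cases "i = Suc m")
    case True then show ?thesis by (simp add: tle_refl)
  next
    case False
    then have "tle (C!i) (C!m)" using Suc by auto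
    moreover have "tle (C!m) (C!Suc m)" using assms(1) Suc.prems unfolding is_chain_def by auto
    ultimately show ?thesis by (rule tle_trans)
  qed
qed

lemma dC_le_len: "dC F C \<le> length C"
proof -
  have "{i. Suc i < length C \<and> is_jump F (C ! i) (C ! Suc i)} \<subseteq> {..<length C}" by auto
  then show ?thesis unfolding dC_def using card_mono[of "{..<length C}"] by fastforce
qed

lemma chain_len: "is_chain n C \<Longrightarrow> length C \<le> card {xs::bool list. length xs = n}"
proof -
  assume c: "is_chain n C"
  then have "length C = card (set C)" unfolding is_chain_def by (simp add: distinct_card)
  moreover have "set C \<subseteq> {xs. length xs = n}" using c unfolding is_chain_def by auto
  ultimately show ?thesis using card_mono[OF finite_list_length] by simp
qed

lemma dF_fin: "finite {dC F C | C. is_chain n C}"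
proof -
  have "{dC F C | C. is_chain n C} \<subseteq> {..card {xs::bool list. length xs = n}}"
    using chain_len dC_le_len by (fastforce intro: le_trans)
  then show ?thesis using finite_subset by blast
qed

lemma dC_le_dF: "is_chain n C \<Longrightarrow> dC F C \<le> dF n F"
  unfolding dF_def by (rule Max_ge[OF dF_fin]) blast

lemma alt_chain:
  fixes v :: "nat \<Rightarrow> bool list"
  assumes len: "\<forall>a<2*s. length (v a) = k"
    and mono: "\<forall>a b. a \<le> b \<longrightarrow> b < 2*s \<longrightarrow> tle (v a) (v b)"
    and ev: "\<forall>t<s. w (v (2*t))" and od: "\<forall>t<s. \<not> w (v (2*t+1))"
  shows "s \<le> dF k {w}"
proof -
  define C where "C = map v [0..<2*s]"
  have wa: "w (v a) \<noteq> w (v (Suc a))" if "Suc a < 2*s" for a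
  proof (cases "even a")
    case True
    then obtain t where "a = 2*t" by blast
    then show ?thesis using that ev od by auto
  next
    case False
    then obtain t where at: "a = 2*t+1" using oddE by blast
    have t1: "t + 1 < s" using that at by linarith
    have sa: "Suc a = 2*(t+1)" using at by simp
    have "w (v (Suc a))" unfolding sa using ev t1 by blast
    moreover have "\<not> w (v a)" unfolding at using od t1 by simp
    ultimately show ?thesis by blast
  qed
  have inj: "inj_on v {0..<2*s}"
  proof (rule inj_onI)
    fix a b assume a: "a \<in> {0..<2*s}" and b: "b \<in> {0..<2*s}" and e: "v a = v b"
    show "a = b"
    proof (rule ccontr)
      assume "a \<noteq> b"
      then consider "a < b" | "b < a" by linarith
      then show False
      proof cases
        case 1
        have "tle (v a) (v (Suc a))" "tle (v (Suc a)) (v b)" using mono 1 b by auto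
        then have "v a = v (Suc a)" using e by (metis tle_antisym)
        then show False using wa[of a] 1 b by auto
      next
        case 2
        have "tle (v b) (v (Suc b))" "tle (v (Suc b)) (v a)" using mono 2 a by auto
        then have "v b = v (Suc b)" using e by (metis tle_antisym)
        then show False using wa[of b] 2 a by auto
      qed
    qed
  qed
  have ch: "is_chain k C"
    unfolding is_chain_def C_def using inj len mono by (auto simp: distinct_map)
  have "(\<lambda>t. 2*t) ` {..<s} \<subseteq> {i. Suc i < length C \<and> is_jump {w} (C ! i) (C ! Suc i)}"
  proof
    fix i assume "i \<in> (\<lambda>t. 2*t) ` {..<s}"
    then obtain t where t: "t < s" "i = 2*t" by auto
    then have "Suc i < length C" "C ! i = v (2*t)" "C ! Suc i = v (2*t+1)"
      unfolding C_def by auto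
    then show "i \<in> {i. Suc i < length C \<and> is_jump {w} (C ! i) (C ! Suc i)}"
      unfolding is_jump_def using t ev od mono by auto
  qed
  moreover have "finite {i. Suc i < length C \<and> is_jump {w} (C ! i) (C ! Suc i)}"
    by (rule finite_subset[of _ "{..<length C}"]) auto
  ultimately have "card ((\<lambda>t. 2*t) ` {..<s}) \<le> dC {w} C"
    unfolding dC_def by (rule card_mono[rotated])
  moreover have "card ((\<lambda>t. 2*t) ` {..<s}) = s"
    by (subst card_image) (auto simp: inj_on_def)
  ultimately show ?thesis using dC_le_dF[OF ch, of "{w}"] by linarith
qed

lemma lift_mono: "(\<forall>a. Suc a < N \<longrightarrow> (q a::nat) \<le> q (Suc a)) \<Longrightarrow> a \<le> b \<Longrightarrow> b < N \<Longrightarrow> q a \<le> q b"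
proof (induction b)
  case 0 then show ?case by simp
next
  case (Suc b)
  show ?case
  proof (cases "a = Suc b")
    case False
    then have "q a \<le> q b" using Suc by auto
    then show ?thesis using Suc.prems by (meson le_trans)
  qed simp
qed

lemma alt_from_q:
  fixes u :: "nat \<Rightarrow> bool list" and q :: "nat \<Rightarrow> nat"
  assumes len: "\<forall>i\<in>Q. length (u i) = k"
    and mono: "\<forall>i\<in>Q. \<forall>i'\<in>Q. i \<le> i' \<longrightarrow> tle (u i) (u i')"
    and qQ: "\<forall>a<2*s. q a \<in> Q"
    and qm: "\<forall>a. Suc a < 2*s \<longrightarrow> q a \<le> q (Suc a)"
    and ev: "\<forall>t<s. w (u (q (2*t)))" and od: "\<forall>t<s. \<not> w (u (q (2*t+1)))"
  shows "s \<le> dF k {w}"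
proof (rule alt_chain[where v="\<lambda>a. u (q a)"])
  show "\<forall>a<2*s. length (u (q a)) = k" using len qQ by auto
  show "\<forall>a b. a \<le> b \<longrightarrow> b < 2*s \<longrightarrow> tle (u (q a)) (u (q b))"
  proof (intro allI impI)
    fix a b assume "a \<le> b" "b < 2*s"
    then have "q a \<le> q b" using lift_mono[OF qm] by blast
    moreover have "q a \<in> Q" "q b \<in> Q" using qQ \<open>a \<le> b\<close> \<open>b < 2*s\<close> by auto
    ultimately show "tle (u (q a)) (u (q b))" using mono by blast
  qed
qed (use ev od in auto)

lemma sorted_nth_le: "sorted_wrt (<) (xs::nat list) \<Longrightarrow> i \<le> j \<Longrightarrow> j < length xs \<Longrightarrow> xs!i \<le> xs!j"
  by (metis le_eq_less_or_eq order_less_imp_le sorted_wrt_nth_less)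

lemma comb:
  fixes u :: "nat \<Rightarrow> bool list" and Q P :: "nat set"
  assumes len: "\<forall>i\<in>Q. length (u i) = k"
    and mono: "\<forall>i\<in>Q. \<forall>i'\<in>Q. i \<le> i' \<longrightarrow> tle (u i) (u i')"
    and P: "P \<subseteq> {i. i \<in> Q \<and> Suc i \<in> Q \<and> w (u i) \<noteq> w (u (Suc i))}"
    and fin: "finite P"
  shows "card P \<le> 2 * dF k {w} + 1"
proof -
  define P1 where "P1 = {i\<in>P. w (u i)}"
  define P0 where "P0 = {i\<in>P. \<not> w (u i)}"
  have fin1: "finite P1" and fin0: "finite P0" using fin unfolding P1_def P0_def by auto
  have "P = P1 \<union> P0" "P1 \<inter> P0 = {}" unfolding P1_def P0_def by auto
  then have cP: "card P = card P1 + card P0" using fin1 fin0 by (simp add: card_Un_disjoint)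
  have c1: "card P1 \<le> dF k {w}"
  proof -
    define xs where "xs = sorted_list_of_set P1"
    have sx: "sorted_wrt (<) xs" unfolding xs_def by (rule strict_sorted_list_of_set)
    have lx: "length xs = card P1" unfolding xs_def by simp
    have sxP: "xs ! t \<in> P1" if "t < card P1" for t
      using that fin1 lx unfolding xs_def by (metis nth_mem set_sorted_list_of_set)
    define q where "q a = (if even a then xs!(a div 2) else Suc (xs!(a div 2)))" for a
    show ?thesis
    proof (rule alt_from_q[OF len mono, where q=q])
      show "\<forall>a<2 * card P1. q a \<in> Q"
      proof (intro allI impI)
        fix a assume "a < 2 * card P1"
        then have "xs!(a div 2) \<in> P1" using sxP by auto
        then show "q a \<in> Q" using P unfolding q_def P1_def by auto
      qed
      show "\<forall>a. Suc a < 2 * card P1 \<longrightarrow> q a \<le> q (Suc a)"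
      proof (intro allI impI)
        fix a assume a: "Suc a < 2 * card P1"
        show "q a \<le> q (Suc a)"
        proof (cases "even a")
          case True then show ?thesis unfolding q_def by auto
        next
          case False
          then obtain t where at: "a = 2*t+1" using oddE by blast
          then have "t + 1 < length xs" using a lx by linarith
          then have "xs!t < xs!(t+1)" using sx sorted_wrt_nth_less by fastforce
          then show ?thesis unfolding q_def at by simp
        qed
      qed
      show "\<forall>t<card P1. w (u (q (2 * t)))"
        using sxP unfolding q_def P1_def by auto
      show "\<forall>t<card P1. \<not> w (u (q (2 * t + 1)))"
      proof (intro allI impI)
        fix t assume "t < card P1"
        then have "xs!t \<in> P1" using sxP by auto
        then show "\<not> w (u (q (2 * t + 1)))" using P unfolding q_def P1_def by auto
      qed
    qed
  qed
  have c0: "card P0 \<le> dF k {w} + 1"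
  proof (cases "P0 = {}")
    case True then show ?thesis by simp
  next
    case False
    then have cp: "card P0 \<ge> 1" using fin0 by (simp add: Suc_leI card_gt_0_iff)
    define s where "s = card P0 - 1"
    define xs where "xs = sorted_list_of_set P0"
    have sx: "sorted_wrt (<) xs" unfolding xs_def by (rule strict_sorted_list_of_set)
    have lx: "length xs = s + 1" unfolding xs_def s_def using cp by simp
    have sxP: "xs ! t \<in> P0" if "t < s + 1" for t
      using that fin0 lx unfolding xs_def by (metis nth_mem set_sorted_list_of_set)
    define q where "q a = (if even a then Suc (xs!(a div 2)) else xs!(a div 2 + 1))" for a
    have "s \<le> dF k {w}"
    proof (rule alt_from_q[OF len mono, where q=q])
      show "\<forall>a<2 * s. q a \<in> Q"
      proof (intro allI impI)
        fix a assume "a < 2 * s"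
        then have "xs!(a div 2) \<in> P0" "xs!(a div 2 + 1) \<in> P0" using sxP by auto
        then show "q a \<in> Q" using P unfolding q_def P0_def by auto
      qed
      show "\<forall>a. Suc a < 2 * s \<longrightarrow> q a \<le> q (Suc a)"
      proof (intro allI impI)
        fix a assume a: "Suc a < 2 * s"
        show "q a \<le> q (Suc a)"
        proof (cases "even a")
          case True
          then obtain t where at: "a = 2*t" by blast
          then have "t + 1 < length xs" using a lx by linarith
          then have "xs!t < xs!(t+1)" using sx sorted_wrt_nth_less by fastforce
          then show ?thesis unfolding q_def at by simp
        next
          case False
          then obtain t where at: "a = 2*t+1" using oddE by blast
          show ?thesis unfolding q_def at by simp
        qed
      qed
      show "\<forall>t<s. w (u (q (2 * t)))"
      proof (intro allI impI)
        fix t assume "t < s"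
        then have "xs!t \<in> P0" using sxP by auto
        then show "w (u (q (2 * t)))" using P unfolding q_def P0_def by auto
      qed
      show "\<forall>t<s. \<not> w (u (q (2 * t + 1)))"
      proof (intro allI impI)
        fix t assume "t < s"
        then have "xs!(t+1) \<in> P0" using sxP by auto
        then show "\<not> w (u (q (2 * t + 1)))" unfolding q_def P0_def by auto
      qed
    qed
    then show ?thesis unfolding s_def by linarith
  qed
  show ?thesis using cP c1 c0 by linarith
qed


lemma mono_node:
  assumes wf: "wf_circuit n gs" and lx: "length x = n" and ly: "length y = n" and t: "tle x y"
  shows "q < n + length gs \<Longrightarrow>
    (\<forall>j<length gs. gate_weight (gs!j) = 1 \<longrightarrow> n + j \<le> q \<longrightarrow> circ_vals gs x ! (n+j) = circ_vals gs y ! (n+j)) \<Longrightarrow>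
    circ_vals gs x ! q \<le> circ_vals gs y ! q"
proof (induction q rule: less_induct)
  case (less q)
  show ?case
  proof (cases "q < n")
    case True
    then have "x ! q \<le> y ! q" using list_all2_nthD[of "(\<le>)" x y q] t lx unfolding tle_def by blast
    then show ?thesis using True lx ly by (simp add: cv_prefix)
  next
    case False
    then obtain j where qj: "q = n + j" by (metis le_iff_add not_less)
    then have j: "j < length gs" using less.prems by simp
    obtain g as where gj: "gs ! j = (g, as)" by force
    have args: "\<forall>i\<in>set as. i < n + j" using wf j gj unfolding wf_circuit_def by (metis snd_conv)
    have vx: "circ_vals gs x ! q = g (map (\<lambda>i. circ_vals gs x ! i) as)"
      using cv_gate[of j gs x] j args gj lx qj by simp
    have vy: "circ_vals gs y ! q = g (map (\<lambda>i. circ_vals gs y ! i) as)"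
      using cv_gate[of j gs y] j args gj ly qj by simp
    show ?thesis
    proof (cases "gate_weight (gs!j) = 1")
      case True
      then show ?thesis using less.prems(2) j qj by simp
    next
      case False
      then have mf: "monotone_fn (length as) g" using gj unfolding gate_weight_def by (simp split: if_splits)
      have "tle (map (\<lambda>i. circ_vals gs x ! i) as) (map (\<lambda>i. circ_vals gs y ! i) as)"
        unfolding tle_def list_all2_conv_all_nth
      proof (intro conjI allI impI)
        fix p assume p: "p < length (map (\<lambda>i. circ_vals gs x ! i) as)"
        then have ap: "as ! p < q" using args qj by simp
        have "circ_vals gs x ! (as!p) \<le> circ_vals gs y ! (as!p)"
          using less.IH[OF ap] ap less.prems by auto
        then show "map (\<lambda>i. circ_vals gs x ! i) as ! p \<le> map (\<lambda>i. circ_vals gs y ! i) as ! p"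
          using p by simp
      qed simp
      then have "g (map (\<lambda>i. circ_vals gs x ! i) as) \<le> g (map (\<lambda>i. circ_vals gs y ! i) as)"
        using mf unfolding monotone_fn_def by (metis length_map)
      then show ?thesis using vx vy by simp
    qed
  qed
qed

lemma rB_ge: "(k, w) \<in> set oms \<Longrightarrow> dF k {w} \<le> r_B oms"
  unfolding r_B_def by (rule Max_ge) force+

lemma count_changes:
  assumes wf: "wf_circuit n gs" and basis: "\<forall>gt\<in>set gs. gate_in_basis oms gt"
    and ch: "is_chain n C"
  shows "b \<le> length gs \<Longrightarrow> card {i. Suc i < length C \<and> (\<exists>j\<in>{j. j < b \<and> gate_weight (gs!j) = 1}.
           circ_vals gs (C!i) ! (n+j) \<noteq> circ_vals gs (C!Suc i) ! (n+j))}
         \<le> (2 ^ card {j. j < b \<and> gate_weight (gs!j) = 1} - 1) * (2 * r_B oms + 1)"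
proof (induction b)
  case 0 then show ?case by simp
next
  case (Suc b)
  define V where "V x q = circ_vals gs x ! q" for x q
  define S where "S b = {j. j < b \<and> gate_weight (gs!j) = 1}" for b
  define chs where "chs b = {i. Suc i < length C \<and> (\<exists>j\<in>S b. V (C!i) (n+j) \<noteq> V (C!Suc i) (n+j))}" for b
  define R where "R = 2 * r_B oms + 1"
  have IH: "card (chs b) \<le> (2 ^ card (S b) - 1) * R"
    using Suc unfolding chs_def S_def V_def R_def by simp
  have lenC: "\<forall>a\<in>set C. length a = n" using ch unfolding is_chain_def by simp
  have finS: "finite (S b)" unfolding S_def by simp
  have "card (chs (Suc b)) \<le> (2 ^ card (S (Suc b)) - 1) * R"
  proof (cases "gate_weight (gs!b) = 1")
    case False
    then have "S (Suc b) = S b" unfolding S_def using less_Suc_eq by auto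
    then show ?thesis using IH unfolding chs_def by simp
  next
    case True
    have SS: "S (Suc b) = insert b (S b)" unfolding S_def using True less_Suc_eq by auto
    have bS: "b \<notin> S b" unfolding S_def by simp
    have cS: "card (S (Suc b)) = Suc (card (S b))" using SS bS finS by simp
    define pat where "pat x = {j\<in>S b. V x (n+j)}" for x
    define PP where "PP p = {i. Suc i < length C \<and> pat (C!i) = p \<and> pat (C!Suc i) = p \<and>
       V (C!i) (n+b) \<noteq> V (C!Suc i) (n+b)}" for p
    have sub: "chs (Suc b) \<subseteq> chs b \<union> (\<Union>p\<in>Pow (S b). PP p)"
    proof
      fix i assume i: "i \<in> chs (Suc b)"
      show "i \<in> chs b \<union> (\<Union>p\<in>Pow (S b). PP p)"
      proof (cases "i \<in> chs b")
        case False
        then have eqs: "\<forall>j\<in>S b. V (C!i) (n+j) = V (C!Suc i) (n+j)" using i unfolding chs_def by auto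
        then have pe: "pat (C!i) = pat (C!Suc i)" unfolding pat_def by auto
        from i obtain j where j: "j \<in> S (Suc b)" "V (C!i) (n+j) \<noteq> V (C!Suc i) (n+j)" "Suc i < length C"
          unfolding chs_def by auto
        then have "j = b" using SS eqs by auto
        then have "i \<in> PP (pat (C!i))" unfolding PP_def using j pe by auto
        moreover have "pat (C!i) \<in> Pow (S b)" unfolding pat_def by auto
        ultimately show ?thesis by blast
      qed simp
    qed
    obtain g as where gb: "gs ! b = (g, as)" by force
    have bl: "b < length gs" using Suc.prems by simp
    have "gate_in_basis oms (gs!b)" using basis bl by simp
    moreover have "\<not> monotone_fn (length as) g" using True gb unfolding gate_weight_def by (simp split: if_splits)
    ultimately obtain k w where kw: "(k, w) \<in> set oms" "k = length as" "\<forall>xs. length xs = length as \<longrightarrow> g xs = w xs"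
      using gb unfolding gate_in_basis_def Let_def by auto
    have args: "\<forall>i\<in>set as. i < n + b" using wf bl gb unfolding wf_circuit_def by (metis snd_conv)
    have PPb: "card (PP p) \<le> R" for p
    proof -
      define Q where "Q = {i. i < length C \<and> pat (C!i) = p}"
      define u where "u i = map (\<lambda>q. V (C!i) q) as" for i
      have vb: "V (C!i) (n+b) = w (u i)" if "i < length C" for i
      proof -
        have l: "length (C!i) = n" using lenC that by simp
        have "V (C!i) (n+b) = g (u i)"
          using cv_gate[of b gs "C!i"] bl args gb l unfolding V_def u_def by simp
        then show ?thesis using kw unfolding u_def by simp
      qed
      have len: "\<forall>i\<in>Q. length (u i) = k" unfolding u_def using kw by simp
      have mono: "\<forall>i\<in>Q. \<forall>i'\<in>Q. i \<le> i' \<longrightarrow> tle (u i) (u i')"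
      proof (intro ballI impI)
        fix i i' assume iQ: "i \<in> Q" and i'Q: "i' \<in> Q" and ii: "i \<le> i'"
        have tl: "tle (C!i) (C!i')" using chain_tle[OF ch ii] i'Q unfolding Q_def by simp
        have l1: "length (C!i) = n" and l2: "length (C!i') = n" using lenC iQ i'Q unfolding Q_def by auto
        have pe: "pat (C!i) = pat (C!i')" using iQ i'Q unfolding Q_def by simp
        have eqj: "V (C!i) (n+j) = V (C!i') (n+j)" if "j \<in> S b" for j
        proof -
          have "j \<in> pat (C!i) \<longleftrightarrow> j \<in> pat (C!i')" using pe by simp
          then show ?thesis using that unfolding pat_def by auto
        qed
        show "tle (u i) (u i')"
          unfolding tle_def list_all2_conv_all_nth
        proof (intro conjI allI impI)
          fix pp assume pp: "pp < length (u i)"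
          then have ap: "as ! pp < n + b" using args unfolding u_def by simp
          have "V (C!i) (as!pp) \<le> V (C!i') (as!pp)"
            unfolding V_def
          proof (rule mono_node[OF wf l1 l2 tl])
            show "as ! pp < n + length gs" using ap bl by simp
            show "\<forall>j<length gs. gate_weight (gs ! j) = 1 \<longrightarrow> n + j \<le> as ! pp \<longrightarrow>
                  circ_vals gs (C ! i) ! (n + j) = circ_vals gs (C ! i') ! (n + j)"
              using eqj ap unfolding S_def V_def by auto
          qed
          then show "u i ! pp \<le> u i' ! pp" using pp unfolding u_def by simp
        qed (simp add: u_def)
      qed
      have PPs: "PP p \<subseteq> {i. i \<in> Q \<and> Suc i \<in> Q \<and> w (u i) \<noteq> w (u (Suc i))}"
        unfolding PP_def Q_def using vb by auto
      have "finite (PP p)" unfolding PP_def by (rule finite_subset[of _ "{..<length C}"]) auto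
      then have "card (PP p) \<le> 2 * dF k {w} + 1" using comb[OF len mono PPs] by blast
      then show ?thesis using rB_ge[OF kw(1)] unfolding R_def by linarith
    qed
    have finchs: "finite (chs b)" unfolding chs_def by (rule finite_subset[of _ "{..<length C}"]) auto
    have finPP: "finite (PP p)" for p unfolding PP_def by (rule finite_subset[of _ "{..<length C}"]) auto
    have "card (chs (Suc b)) \<le> card (chs b \<union> (\<Union>p\<in>Pow (S b). PP p))"
      by (rule card_mono[OF _ sub]) (use finPP finS finchs in auto)
    also have "\<dots> \<le> card (chs b) + card (\<Union>p\<in>Pow (S b). PP p)" by (rule card_Un_le)
    also have "card (\<Union>p\<in>Pow (S b). PP p) \<le> (\<Sum>p\<in>Pow (S b). card (PP p))" by (rule card_UN_le) (use finS in simp)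
    also have "\<dots> \<le> (\<Sum>p\<in>Pow (S b). R)" by (rule sum_mono) (rule PPb)
    also have "\<dots> = 2 ^ card (S b) * R" using finS by (simp add: card_Pow)
    finally have "card (chs (Suc b)) \<le> card (chs b) + 2 ^ card (S b) * R" by simp
    also have "\<dots> \<le> (2 ^ card (S b) - 1) * R + 2 ^ card (S b) * R" using IH by simp
    also have "\<dots> = (2 ^ card (S (Suc b)) - 1) * R"
    proof -
      obtain m where m: "2 ^ card (S b) = Suc m" using not0_implies_Suc by (metis power_not_zero zero_neq_numeral)
      show ?thesis unfolding cS using m by (simp add: algebra_simps)
    qed
    finally show ?thesis .
  qed
  then show ?case unfolding chs_def S_def V_def R_def by simp
qed

lemma weight_card: "circ_weight gs = card {j. j < length gs \<and> gate_weight (gs!j) = 1}"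
proof -
  have w01: "gate_weight (gs!j) = (if gate_weight (gs!j) = 1 then 1 else 0)" for j
    unfolding gate_weight_def by simp
  have "circ_weight gs = (\<Sum>j\<in>{0..<length gs}. gate_weight (gs!j))"
    unfolding circ_weight_def by (simp add: sum_list_sum_nth)
  also have "\<dots> = (\<Sum>j\<in>{0..<length gs}. if gate_weight (gs!j) = 1 then 1 else 0)"
    by (rule sum.cong) (rule refl, rule w01)
  also have "\<dots> = (\<Sum>j\<in>{j\<in>{0..<length gs}. gate_weight (gs!j) = 1}. 1)"
    by (rule sum.inter_filter[symmetric]) simp
  also have "\<dots> = card {j. j < length gs \<and> gate_weight (gs!j) = 1}"
    by (simp add: atLeast0LessThan)
  finally show ?thesis .
qed

lemma dF_bound:
  assumes r: "realizes oms n gs F"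
  shows "dF n F \<le> (2 ^ circ_weight gs - 1) * (2 * r_B oms + 1)"
proof -
  have wf: "wf_circuit n gs" and basis: "\<forall>gt\<in>set gs. gate_in_basis oms gt"
    and real: "\<forall>f\<in>F. \<exists>j < n + length gs. \<forall>xs. length xs = n \<longrightarrow> circ_vals gs xs ! j = f xs"
    using r unfolding realizes_def by auto
  have "dC F C \<le> (2 ^ circ_weight gs - 1) * (2 * r_B oms + 1)" if ch: "is_chain n C" for C
  proof -
    define J where "J = {i. Suc i < length C \<and> is_jump F (C ! i) (C ! Suc i)}"
    define K where "K = {i. Suc i < length C \<and> (\<exists>j\<in>{j. j < length gs \<and> gate_weight (gs!j) = 1}.
           circ_vals gs (C!i) ! (n+j) \<noteq> circ_vals gs (C!Suc i) ! (n+j))}"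
    have lenC: "\<forall>a\<in>set C. length a = n" using ch unfolding is_chain_def by simp
    have "J \<subseteq> K"
    proof
      fix i assume i: "i \<in> J"
      then have si: "Suc i < length C" and tl: "tle (C!i) (C!Suc i)" and
        ex: "\<exists>f\<in>F. f (C!i) > f (C!Suc i)" unfolding J_def is_jump_def by auto
      from ex obtain f where f: "f \<in> F" "f (C!i) > f (C!Suc i)" by blast
      from real f obtain m where m: "m < n + length gs" "\<forall>xs. length xs = n \<longrightarrow> circ_vals gs xs ! m = f xs" by blast
      have l1: "length (C!i) = n" and l2: "length (C!Suc i) = n" using lenC si by auto
      show "i \<in> K"
      proof (rule ccontr)
        assume "i \<notin> K"
        then have "\<forall>j<length gs. gate_weight (gs ! j) = 1 \<longrightarrow> n + j \<le> m \<longrightarrow>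
                  circ_vals gs (C ! i) ! (n + j) = circ_vals gs (C ! Suc i) ! (n + j)"
          unfolding K_def using si by auto
        then have "circ_vals gs (C!i) ! m \<le> circ_vals gs (C!Suc i) ! m"
          using mono_node[OF wf l1 l2 tl m(1)] by blast
        then show False using m(2) l1 l2 f(2) by simp
      qed
    qed
    moreover have "finite K" unfolding K_def by (rule finite_subset[of _ "{..<length C}"]) auto
    ultimately have "dC F C \<le> card K" unfolding dC_def J_def[symmetric] by (rule card_mono[rotated])
    also have "card K \<le> (2 ^ circ_weight gs - 1) * (2 * r_B oms + 1)"
      unfolding K_def weight_card using count_changes[OF wf basis ch, of "length gs"] by simp
    finally show ?thesis .
  qed
  moreover have "is_chain n []" unfolding is_chain_def by simp
  ultimately show ?thesis unfolding dF_def using dF_fin[of F n]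
    by (subst Max_le_iff) auto
qed


lemma const_mono: "monotone_fn k (\<lambda>_. c)"
  unfolding monotone_fn_def by simp

lemma realizable:
  assumes oms: "length oms \<ge> 1" and nm: "\<forall>(k, w) \<in> set oms. \<not> monotone_fn k w" and fF: "finite F"
  shows "\<exists>gs. realizes oms n gs F"
proof -
  have "hd oms \<in> set oms" using oms by (cases oms) auto
  then obtain k w where kw: "(k, w) \<in> set oms" by (metis surj_pair)
  then have "\<not> monotone_fn k w" using nm by auto
  then obtain xs ys where xy: "length xs = k" "length ys = k" "tle xs ys" "w xs" "\<not> w ys"
    unfolding monotone_fn_def by (auto simp: le_bool_def)
  have xyj: "\<not> xs!j \<and> ys!j" if "j < k" "xs!j \<noteq> ys!j" for j
  proof -
    have "xs!j \<le> ys!j" using list_all2_nthD[of "(\<le>)" xs ys j] xy that unfolding tle_def by blast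
    then show ?thesis using that by (auto simp: le_bool_def)
  qed
  obtain fl where fl: "set fl = F" using fF finite_list by blast
  define neg where "neg i = (w, map (\<lambda>j. if xs!j = ys!j then (if xs!j then n+1 else n) else i) [0..<k])" for i
  define G where "G f = (\<lambda>v::bool list. \<exists>y. length y = n \<and> f y \<and> (\<forall>i<n. if y!i then v!i else v!(n+i)))" for f :: "bool list \<Rightarrow> bool"
  define fin where "fin f = (G f, [0..<n] @ [n+2..<n+2+n])" for f
  define gs where "gs = [(\<lambda>_. False, []), (\<lambda>_. True, [])] @ map neg [0..<n] @ map fin fl"
  have lgs: "length gs = 2 + n + length fl" unfolding gs_def by simp
  have g0: "gs!0 = (\<lambda>_. False, [])" and g1: "gs!1 = (\<lambda>_. True, [])" unfolding gs_def by simp_all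
  have gneg: "gs!(2+i) = neg i" if "i < n" for i unfolding gs_def using that by (simp add: nth_append)
  have gfin: "gs!(2+n+t) = fin (fl!t)" if "t < length fl" for t unfolding gs_def using that by (simp add: nth_append)
  have gcases: "j = 0 \<or> j = 1 \<or> (\<exists>i<n. j = 2+i) \<or> (\<exists>t<length fl. j = 2+n+t)" if "j < length gs" for j
    using that lgs by presburger
  have wf: "wf_circuit n gs"
    unfolding wf_circuit_def
  proof (intro allI impI ballI)
    fix j i assume j: "j < length gs" and i: "i \<in> set (snd (gs ! j))"
    from gcases[OF j] show "i < n + j"
    proof (elim disjE exE conjE)
      fix i' assume "i' < n" "j = 2 + i'" then show ?thesis using i gneg unfolding neg_def by (auto split: if_splits)
    next
      fix t assume "t < length fl" "j = 2 + n + t" then show ?thesis using i gfin unfolding fin_def by auto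
    qed (use i g0 g1 in auto)
  qed
  have basis: "\<forall>gt\<in>set gs. gate_in_basis oms gt"
  proof
    fix gt assume "gt \<in> set gs"
    then obtain j where j: "j < length gs" "gt = gs!j" by (metis in_set_conv_nth)
    from gcases[OF j(1)] show "gate_in_basis oms gt"
    proof (elim disjE exE conjE)
      fix i' assume "i' < n" "j = 2 + i'"
      then have "gt = neg i'" using gneg j by simp
      then show ?thesis unfolding gate_in_basis_def neg_def using kw by auto
    next
      fix t assume "t < length fl" "j = 2 + n + t"
      then have gt: "gt = fin (fl!t)" using gfin j by simp
      have "monotone_fn (2*n) (G (fl!t))"
        unfolding monotone_fn_def
      proof (intro allI impI)
        fix v v' :: "bool list" assume l: "length v = 2*n" "length v' = 2*n" and tv: "tle v v'"
        have le: "v!p \<le> v'!p" if "p < 2*n" for p using list_all2_nthD[of "(\<le>)" v v' p] tv l that unfolding tle_def by auto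
        show "G (fl!t) v \<le> G (fl!t) v'"
        proof (rule le_boolI)
          assume "G (fl!t) v"
          then obtain y where y: "length y = n" "(fl!t) y" "\<forall>i<n. if y!i then v!i else v!(n+i)" unfolding G_def by blast
          have "\<forall>i<n. if y!i then v'!i else v'!(n+i)"
          proof (intro allI impI)
            fix i assume "i < n"
            then show "if y!i then v'!i else v'!(n+i)" using y(3) le[of i] le[of "n+i"] by (auto simp: le_bool_def split: if_splits)
          qed
          then show "G (fl!t) v'" unfolding G_def using y by blast
        qed
      qed
      moreover have ln: "length (snd gt) = 2*n" unfolding gt fin_def by auto
      ultimately show ?thesis unfolding gate_in_basis_def Let_def ln
        by (intro disjI1) (simp add: gt fin_def)
    qed (use j g0 g1 const_mono in \<open>auto simp: gate_in_basis_def\<close>)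
  qed
  have real: "\<forall>f\<in>F. \<exists>j < n + length gs. \<forall>x. length x = n \<longrightarrow> circ_vals gs x ! j = f x"
  proof
    fix f assume "f \<in> F"
    then obtain t where t: "t < length fl" "f = fl!t" using fl by (metis in_set_conv_nth)
    have "\<forall>x. length x = n \<longrightarrow> circ_vals gs x ! (n + (2+n+t)) = f x"
    proof (intro allI impI)
      fix x :: "bool list" assume lx: "length x = n"
      define V where "V = circ_vals gs x"
      have args: "\<forall>i\<in>set (snd (gs ! j)). i < length x + j" if "j < length gs" for j
        using wf that lx unfolding wf_circuit_def by auto
      have Vx: "V!i = x!i" if "i < n" for i using that lx unfolding V_def by (simp add: cv_prefix)
      have V0: "V!n = False" using cv_gate[of 0 gs x] args[of 0] lgs g0 lx unfolding V_def by simp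
      have V1: "V!(n+1) = True" using cv_gate[of 1 gs x] args[of 1] lgs g1 lx unfolding V_def by simp
      have Vneg: "V!(n+(2+i)) = (\<not> x!i)" if i: "i < n" for i
      proof -
        have "V!(n+(2+i)) = w (map (\<lambda>p. V!p) (map (\<lambda>j. if xs!j = ys!j then (if xs!j then n+1 else n) else i) [0..<k]))"
          using cv_gate[of "2+i" gs x] args[of "2+i"] lgs gneg[OF i] lx i unfolding V_def neg_def by simp
        also have "map (\<lambda>p. V!p) (map (\<lambda>j. if xs!j = ys!j then (if xs!j then n+1 else n) else i) [0..<k])
             = (if x!i then ys else xs)"
        proof (rule nth_equalityI)
          fix j assume "j < length (map (\<lambda>p. V!p) (map (\<lambda>j. if xs!j = ys!j then (if xs!j then n+1 else n) else i) [0..<k]))"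
          then have j: "j < k" by simp
          show "map (\<lambda>p. V!p) (map (\<lambda>j. if xs!j = ys!j then (if xs!j then n+1 else n) else i) [0..<k]) ! j = (if x!i then ys else xs) ! j"
            using j xyj[OF j] V0 V1 Vx[OF i] by auto
        qed (use xy in simp)
        finally show ?thesis using xy by simp
      qed
      have "V!(n+(2+n+t)) = G (fl!t) (map (\<lambda>p. V!p) ([0..<n] @ [n+2..<n+2+n]))"
        using cv_gate[of "2+n+t" gs x] args[of "2+n+t"] lgs gfin[OF t(1)] lx t unfolding V_def fin_def by simp
      also have "\<dots> = f x"
      proof -
        define v where "v = map (\<lambda>p. V!p) ([0..<n] @ [n+2..<n+2+n])"
        have v1: "v!i = x!i" if "i < n" for i using that Vx unfolding v_def by (simp add: nth_append)
        have v2: "v!(n+i) = (\<not> x!i)" if i: "i < n" for i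
        proof -
          have l0: "length [0..<n] = n" by simp
          have "([0..<n] @ [n+2..<n+2+n]) ! (n+i) = [n+2..<n+2+n] ! i"
            using nth_append_length_plus[of "[0..<n]" "[n+2..<n+2+n]" i] l0 by metis
          also have "\<dots> = n+2+i" by (rule nth_upt) (use i in simp)
          finally have ix: "([0..<n] @ [n+2..<n+2+n]) ! (n+i) = n+(2+i)" by simp
          have ll: "n + i < length ([0..<n] @ [n+2..<n+2+n])" using i by auto
          have "v!(n+i) = V!(([0..<n] @ [n+2..<n+2+n]) ! (n+i))" unfolding v_def using nth_map[OF ll] by blast
          then show ?thesis using ix Vneg[OF i] by simp
        qed
        have "G f v = f x"
        proof
          assume "G f v"
          then obtain y where y: "length y = n" "f y" "\<forall>i<n. if y!i then v!i else v!(n+i)" unfolding G_def by blast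
          have "y = x"
          proof (rule nth_equalityI)
            fix i assume "i < length y"
            then show "y!i = x!i" using y(1,3) v1 v2 by (cases "y!i") force+
          qed (use y lx in simp)
          then show "f x" using y by simp
        next
          assume "f x" then show "G f v" unfolding G_def using lx v1 v2 by auto
        qed
        then show ?thesis using t unfolding v_def by simp
      qed
      finally show "circ_vals gs x ! (n + (2+n+t)) = f x" unfolding V_def .
    qed
    moreover have "n + (2+n+t) < n + length gs" using lgs t by simp
    ultimately show "\<exists>j < n + length gs. \<forall>x. length x = n \<longrightarrow> circ_vals gs x ! j = f x" by blast
  qed
  show ?thesis unfolding realizes_def using wf basis real by blast
qed

theorem lemma2:
  fixes oms :: "(nat \<times> (bool list \<Rightarrow> bool)) list"
    and n :: nat and F :: "(bool list \<Rightarrow> bool) set"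
  assumes "length oms \<ge> 1"
    and "\<forall>(k, w) \<in> set oms. \<not> monotone_fn k w"
    and "finite F"
  shows "real (I_B oms n F) \<ge> real_of_int \<lceil>log 2 (real (dF n F) + 1)\<rceil> - c_B oms"
proof -
  have ex: "\<exists>w gs. realizes oms n gs F \<and> circ_weight gs = w" using realizable[OF assms] by blast
  then obtain gs where gs: "realizes oms n gs F" "circ_weight gs = I_B oms n F"
    unfolding I_B_def using LeastI_ex[OF ex] by blast
  define W where "W = I_B oms n F"
  define R where "R = 2 * r_B oms + 1"
  define D where "D = dF n F"
  have D1: "D \<le> (2 ^ W - 1) * R" using dF_bound[OF gs(1)] gs(2) unfolding W_def R_def D_def by simp
  have R1: "R \<ge> 1" unfolding R_def by simp
  obtain m where m: "(2::nat) ^ W = Suc m" using not0_implies_Suc by (metis power_not_zero zero_neq_numeral)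
  have "D + 1 \<le> m * R + R" using D1 R1 m by simp
  also have "\<dots> = 2 ^ W * R" using m by simp
  finally have DN: "D + 1 \<le> 2 ^ W * R" .
  have "real (D + 1) \<le> real (2 ^ W * R)" using DN by (rule of_nat_mono)
  then have Dr: "real D + 1 \<le> 2 ^ W * real R" by simp
  have Rpos: "real R > 0" unfolding R_def by simp
  have "log 2 (real D + 1) \<le> log 2 (2 ^ W * real R)" by (rule log_mono) (use Dr in auto)
  also have "\<dots> = log 2 (2 ^ W) + log 2 (real R)" by (rule log_mult_pos) (use Rpos in auto)
  also have "log 2 (2 ^ W) = real W" by (rule log_pow_cancel) auto
  finally have L: "log 2 (real D + 1) \<le> real W + log 2 (real R)" .
  have "real_of_int \<lceil>log 2 (real D + 1)\<rceil> < log 2 (real D + 1) + 1"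
    using ceiling_correct[of "log 2 (real D + 1)"] by linarith
  moreover have "c_B oms = log 2 (real R) + 1" unfolding c_B_def R_def by (simp add: add.commute)
  ultimately show ?thesis using L unfolding W_def D_def by linarith
qed

end
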